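(* Let $f:\mathbb{R}^n\to\mathbb{R}$ have $L$-Lipschitz continuous gradient ($L>0$) and satisfy the Polyak–Łojasiewicz condition with constant $\mu>0$: $f(x)-f^*\le \frac{1}{2\mu}\|\nabla f(x)\|^2$ for all $x$, where $f^*=f(x_* )$ for a minimizer $x_*$. Let $\Delta>0$ and suppose an inexact gradient $\widetilde{\nabla}f(x)$ is available with $\|\nabla f(x)-\widetilde{\nabla}f(x)\|\le\Delta$ for all $x$. Consider the gradient method $x_{k+1}=x_k-\frac1L\widetilde{\nabla}f(x_k)$ from $x_0$, and let $$N_*=\left\lceil\frac{L}{\mu}\ln\frac{\mu(f(x_0)-f^* )}{6\Delta^2}\right\rceil.$$ Suppose one of the following holds: (1) the method performs $N_*$ steps (output $\widehat{x}=x_{N_*}$); or (2) for some $N\le N_*$ the stopping criterion $\|\widetilde{\nabla}f(x_k)\|\le\sqrt6\,\Delta$ is satisfied for the first time at iteration $N$ (output $\widehat{x}=x_N$). Then $$f(\widehat{x})-f^*\le\frac{7\Delta^2}{\mu}$$ and $$\|\widehat{x}-x_0\|\le\frac{2\Delta}{\mu}\sqrt{1+\frac{L}{\mu}}\left\lceil\ln\frac{\mu(f(x_0)-f^* )}{6\Delta^2}\right\rceil+\frac{4\sqrt{L(f(x_0)-f^* )}}{\mu}.$$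
   Context: $\|\cdot\|$ is the Euclidean norm; $\lceil\cdot\rceil$ is the ceiling function. *)

theory Defs
  imports "HOL-Analysis.Analysis"
begin

end

theory Submission
  imports Defs
begin

lemma descent:
  fixes f :: "'a::real_inner \<Rightarrow> real" and grad :: "'a \<Rightarrow> 'a"
  assumes L: "L > 0"
    and grad: "\<And>y. (f has_derivative (\<lambda>h. grad y \<bullet> h)) (at y)"
    and lip: "L-lipschitz_on UNIV grad"
  shows "f y \<le> f x + grad x \<bullet> (y - x) + L / 2 * (norm (y - x))\<^sup>2"
proof -
  define h where "h = y - x"
  define \<phi> where "\<phi> t = f (x + t *\<^sub>R h) - t * (grad x \<bullet> h) - L / 2 * t\<^sup>2 * (norm h)\<^sup>2" for t
  have d1: "((\<lambda>t. f (x + t *\<^sub>R h)) has_real_derivative (grad (x + t *\<^sub>R h) \<bullet> h)) (at t)" for t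
  proof -
    have "((\<lambda>t. x + t *\<^sub>R h) has_derivative (\<lambda>s. s *\<^sub>R h)) (at t)"
      by (auto intro!: derivative_eq_intros)
    from has_derivative_compose[OF this grad]
    have "((\<lambda>t. f (x + t *\<^sub>R h)) has_derivative (\<lambda>s. grad (x + t *\<^sub>R h) \<bullet> (s *\<^sub>R h))) (at t)" .
    moreover have "(\<lambda>s. grad (x + t *\<^sub>R h) \<bullet> (s *\<^sub>R h)) = (*) (grad (x + t *\<^sub>R h) \<bullet> h)"
      by (auto simp: mult.commute)
    ultimately show ?thesis by (simp add: has_field_derivative_def)
  qed
  have d: "(\<phi> has_real_derivative (grad (x + t *\<^sub>R h) \<bullet> h - grad x \<bullet> h - L * t * (norm h)\<^sup>2)) (at t)" for t
    unfolding \<phi>_def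
    by (rule derivative_eq_intros d1 refl | simp)+
  have nonpos: "grad (x + t *\<^sub>R h) \<bullet> h - grad x \<bullet> h - L * t * (norm h)\<^sup>2 \<le> 0" if "0 \<le> t" for t
  proof -
    have "grad (x + t *\<^sub>R h) \<bullet> h - grad x \<bullet> h = (grad (x + t *\<^sub>R h) - grad x) \<bullet> h"
      by (simp add: inner_diff_left)
    also have "\<dots> \<le> norm (grad (x + t *\<^sub>R h) - grad x) * norm h"
      by (rule norm_cauchy_schwarz)
    also have "norm (grad (x + t *\<^sub>R h) - grad x) \<le> L * norm (t *\<^sub>R h)"
      using lipschitz_onD[OF lip, of "x + t *\<^sub>R h" x] by (simp add: dist_norm)
    hence "norm (grad (x + t *\<^sub>R h) - grad x) * norm h \<le> L * norm (t *\<^sub>R h) * norm h"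
      by (simp add: mult_right_mono)
    also have "\<dots> = L * t * (norm h)\<^sup>2" using that by (simp add: power2_eq_square)
    finally show ?thesis by simp
  qed
  have "\<phi> 1 \<le> \<phi> 0"
  proof (rule DERIV_nonpos_imp_nonincreasing[of 0 1])
    fix t :: real assume "0 \<le> t" "t \<le> 1"
    then show "\<exists>y. (\<phi> has_real_derivative y) (at t) \<and> y \<le> 0"
      using d[of t] nonpos[of t] by blast
  qed simp
  thus ?thesis unfolding \<phi>_def h_def by simp
qed

lemma step:
  fixes f :: "'a::real_inner \<Rightarrow> real" and grad :: "'a \<Rightarrow> 'a"
  assumes L: "L > 0"
    and grad: "\<And>y. (f has_derivative (\<lambda>h. grad y \<bullet> h)) (at y)"
    and lip: "L-lipschitz_on UNIV grad"
  shows "f (x - (1 / L) *\<^sub>R v) \<le> f x + ((norm (v - grad x))\<^sup>2 - (norm (grad x))\<^sup>2) / (2 * L)"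
proof -
  have 1: "f (x - (1 / L) *\<^sub>R v) \<le> f x + grad x \<bullet> (- ((1 / L) *\<^sub>R v)) + L / 2 * (norm (- ((1 / L) *\<^sub>R v)))\<^sup>2"
    using descent[OF L grad lip, of "x - (1 / L) *\<^sub>R v" x] by simp
  have 2: "(norm (v - grad x))\<^sup>2 = (norm v)\<^sup>2 - 2 * (v \<bullet> grad x) + (norm (grad x))\<^sup>2"
    by (simp add: power2_norm_eq_inner inner_diff_left inner_diff_right inner_commute)
  have 3: "grad x \<bullet> (- ((1 / L) *\<^sub>R v)) = - (v \<bullet> grad x) / L"
    by (simp add: inner_commute)
  have 4: "L / 2 * (norm (- ((1 / L) *\<^sub>R v)))\<^sup>2 = (norm v)\<^sup>2 / (2 * L)"
    using L by (simp add: power2_eq_square field_simps)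
  have 5: "- (v \<bullet> grad x) / L + (norm v)\<^sup>2 / (2 * L) = ((norm (v - grad x))\<^sup>2 - (norm (grad x))\<^sup>2) / (2 * L)"
    unfolding 2 using L by (simp add: field_simps)
  show ?thesis using 1 3 4 5 by linarith
qed
theorem theorem3:
  fixes f :: "real ^ 'n \<Rightarrow> real"
    and grad gt :: "real ^ 'n \<Rightarrow> real ^ 'n"
    and xs x0 :: "real ^ 'n"
    and x :: "nat \<Rightarrow> real ^ 'n"
    and L \<mu> \<Delta> :: real
    and xhat :: "real ^ 'n"
  assumes L_pos: "L > 0"
    and grad: "\<And>y. (f has_derivative (\<lambda>h. grad y \<bullet> h)) (at y)"
    and lip: "L-lipschitz_on UNIV grad"
    and minimizer: "\<And>y. f xs \<le> f y"
    and mu_pos: "\<mu> > 0"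
    and PL: "\<And>y. f y - f xs \<le> 1 / (2 * \<mu>) * (norm (grad y))\<^sup>2"
    and Delta_pos: "\<Delta> > 0"
    and inexact: "\<And>y. norm (grad y - gt y) \<le> \<Delta>"
    and x_0: "x 0 = x0"
    and x_Suc: "\<And>k. x (Suc k) = x k - (1 / L) *\<^sub>R gt (x k)"
    and Nstar_nonneg:
      "0 \<le> \<lceil>L / \<mu> * ln (\<mu> * (f x0 - f xs) / (6 * \<Delta>\<^sup>2))\<rceil>"
    and stop_rule:
      "(\<forall>k. int k < \<lceil>L / \<mu> * ln (\<mu> * (f x0 - f xs) / (6 * \<Delta>\<^sup>2))\<rceil>
              \<longrightarrow> norm (gt (x k)) > sqrt 6 * \<Delta>)
         \<and> xhat = x (nat \<lceil>L / \<mu> * ln (\<mu> * (f x0 - f xs) / (6 * \<Delta>\<^sup>2))\<rceil>)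
       \<or> (\<exists>N::nat. int N \<le> \<lceil>L / \<mu> * ln (\<mu> * (f x0 - f xs) / (6 * \<Delta>\<^sup>2))\<rceil>
              \<and> norm (gt (x N)) \<le> sqrt 6 * \<Delta>
              \<and> (\<forall>k<N. norm (gt (x k)) > sqrt 6 * \<Delta>)
              \<and> xhat = x N)"
  shows "f xhat - f xs \<le> 7 * \<Delta>\<^sup>2 / \<mu>
     \<and> norm (xhat - x0) \<le>
           2 * \<Delta> / \<mu> * sqrt (1 + L / \<mu>)
             * of_int \<lceil>ln (\<mu> * (f x0 - f xs) / (6 * \<Delta>\<^sup>2))\<rceil>
           + 4 * sqrt (L * (f x0 - f xs)) / \<mu>"
proof -
  define d0 where "d0 = f x0 - f xs"
  define lg where "lg = ln (\<mu> * d0 / (6 * \<Delta>\<^sup>2))"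
  define Ns where "Ns = \<lceil>L / \<mu> * lg\<rceil>"
  define d where "d k = f (x k) - f xs" for k
  define a where "a k = norm (grad (x k))" for k
  define b where "b k = norm (gt (x k))" for k
  have Ns_nonneg: "0 \<le> Ns" using Nstar_nonneg unfolding Ns_def lg_def d0_def .
  have d_nonneg: "d k \<ge> 0" for k unfolding d_def using minimizer[of "x k"] by simp
  have d_0: "d 0 = d0" unfolding d_def d0_def x_0 ..
  have d0_nonneg: "d0 \<ge> 0" using d_nonneg[of 0] d_0 by simp
  have ba: "b k \<le> a k + \<Delta>" for k
  proof -
    have "norm (gt (x k)) \<le> norm (grad (x k)) + norm (grad (x k) - gt (x k))"
      using norm_triangle_ineq4[of "grad (x k)" "grad (x k) - gt (x k)"] by simp
    thus ?thesis unfolding a_def b_def using inexact[of "x k"] by linarith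
  qed
  have ab: "a k \<le> b k + \<Delta>" for k
  proof -
    have "norm (grad (x k)) \<le> norm (gt (x k)) + norm (grad (x k) - gt (x k))"
      using norm_triangle_ineq[of "gt (x k)" "grad (x k) - gt (x k)"] by simp
    thus ?thesis unfolding a_def b_def using inexact[of "x k"] by linarith
  qed
  have PLk: "d k \<le> (a k)\<^sup>2 / (2 * \<mu>)" for k
    using PL[of "x k"] unfolding d_def a_def by simp
  have dstep: "d (Suc k) \<le> d k + (\<Delta>\<^sup>2 - (a k)\<^sup>2) / (2 * L)" for k
  proof -
    have "f (x (Suc k)) \<le> f (x k) + ((norm (gt (x k) - grad (x k)))\<^sup>2 - (norm (grad (x k)))\<^sup>2) / (2 * L)"
      unfolding x_Suc by (rule step[OF L_pos grad lip])
    moreover have "(norm (gt (x k) - grad (x k)))\<^sup>2 \<le> \<Delta>\<^sup>2"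
      using inexact[of "x k"] by (simp add: norm_minus_commute power_mono)
    hence "((norm (gt (x k) - grad (x k)))\<^sup>2 - (norm (grad (x k)))\<^sup>2) / (2 * L) \<le> (\<Delta>\<^sup>2 - (norm (grad (x k)))\<^sup>2) / (2 * L)"
      using L_pos by (intro divide_right_mono) auto
    ultimately show ?thesis unfolding d_def a_def by linarith
  qed
  have lower: "(norm (grad y))\<^sup>2 / (2 * L) \<le> f y - f xs" for y
  proof -
    have "f (y - (1 / L) *\<^sub>R grad y) \<le> f y + ((norm (grad y - grad y))\<^sup>2 - (norm (grad y))\<^sup>2) / (2 * L)"
      by (rule step[OF L_pos grad lip])
    moreover have "f xs \<le> f (y - (1 / L) *\<^sub>R grad y)" by (rule minimizer)
    ultimately show ?thesis by (simp add: diff_divide_distrib)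
  qed
  have muL: "\<mu> \<le> L" if "d0 > 0"
  proof -
    have "(a 0)\<^sup>2 / (2 * L) \<le> d0" using lower[of x0] unfolding a_def d0_def x_0 .
    moreover have "d0 \<le> (a 0)\<^sup>2 / (2 * \<mu>)" using PLk[of 0] d_0 by simp
    ultimately have "(a 0)\<^sup>2 / (2 * L) \<le> (a 0)\<^sup>2 / (2 * \<mu>)" "(a 0)\<^sup>2 > 0" using that
      by (linarith, smt (verit) mu_pos divide_nonpos_pos zero_le_power2)
    show ?thesis
    proof (rule ccontr)
      assume "\<not> \<mu> \<le> L"
      hence "(a 0)\<^sup>2 / (2 * \<mu>) < (a 0)\<^sup>2 / (2 * L)"
        using L_pos mu_pos \<open>(a 0)\<^sup>2 > 0\<close> by (intro divide_strict_left_mono) auto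
      thus False using \<open>(a 0)\<^sup>2 / (2 * L) \<le> (a 0)\<^sup>2 / (2 * \<mu>)\<close> by linarith
    qed
  qed
  have lg0: "lg = 0" if "d0 = 0" using that unfolding lg_def by simp
  have ceil_lg: "0 \<le> \<lceil>lg\<rceil>"
  proof (cases "d0 = 0")
    case True thus ?thesis using lg0 by simp
  next
    case False
    hence "\<mu> \<le> L" using muL d0_nonneg by simp
    have "-1 < L / \<mu> * lg" using Ns_nonneg unfolding Ns_def by simp
    show ?thesis
    proof (cases "lg \<ge> 0")
      case True thus ?thesis by simp
    next
      case False
      have "1 \<le> L / \<mu>" using \<open>\<mu> \<le> L\<close> mu_pos by simp
      hence "L / \<mu> * lg \<le> 1 * lg" using False by (intro mult_right_mono_neg) auto
      thus ?thesis using \<open>-1 < L / \<mu> * lg\<close> by simp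
    qed
  qed
  have s6: "2 < sqrt 6"
    by (rule real_less_rsqrt) simp
  have s6': "sqrt 6 < 3"
    by (rule real_sqrt_less_iff[THEN iffD2, of 6 9, simplified])
  have fb: "f xhat - f xs \<le> 7 * \<Delta>\<^sup>2 / \<mu>"
    using stop_rule
  proof (elim disjE conjE exE)
    fix N :: nat assume xh: "xhat = x N" and bN: "norm (gt (x N)) \<le> sqrt 6 * \<Delta>"
    have aN: "a N \<le> (sqrt 6 + 1) * \<Delta>" using ab[of N] bN unfolding b_def by (simp add: algebra_simps)
    have "(a N)\<^sup>2 \<le> ((sqrt 6 + 1) * \<Delta>)\<^sup>2"
      by (rule power_mono[OF aN]) (simp add: a_def)
    also have "\<dots> = (7 + 2 * sqrt 6) * \<Delta>\<^sup>2"
      by (simp add: power2_eq_square algebra_simps)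
    also have "\<dots> \<le> 14 * \<Delta>\<^sup>2" using s6' by (intro mult_right_mono) auto
    finally have "(a N)\<^sup>2 / (2 * \<mu>) \<le> 14 * \<Delta>\<^sup>2 / (2 * \<mu>)"
      using mu_pos by (intro divide_right_mono) auto
    also have "14 * \<Delta>\<^sup>2 / (2 * \<mu>) = 7 * \<Delta>\<^sup>2 / \<mu>" by simp
    finally show ?thesis using PLk[of N] unfolding xh d_def by simp
  next
    assume xh: "xhat = x (nat \<lceil>L / \<mu> * ln (\<mu> * (f x0 - f xs) / (6 * \<Delta>\<^sup>2))\<rceil>)"
    define N where "N = nat Ns"
    have xh': "xhat = x N" using xh unfolding N_def Ns_def lg_def d0_def .
    show ?thesis
    proof (cases "d0 = 0")
      case True
      hence "N = 0" unfolding N_def Ns_def using lg0 by simp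
      thus ?thesis using xh' True d_0 d_def Delta_pos mu_pos by simp
    next
      case False
      hence d0pos: "d0 > 0" using d0_nonneg by simp
      hence "\<mu> \<le> L" by (rule muL)
      define q where "q = 1 - \<mu> / L"
      have q0: "0 \<le> q" using \<open>\<mu> \<le> L\<close> L_pos unfolding q_def by simp
      have ind: "d k \<le> q ^ k * d0 + \<Delta>\<^sup>2 / (2 * \<mu>)" for k
      proof (induction k)
        case 0 thus ?case using d_0 mu_pos by simp
      next
        case (Suc k)
        have "2 * \<mu> * d k \<le> (a k)\<^sup>2" using PLk[of k] mu_pos by (simp add: field_simps)
        hence "d (Suc k) \<le> d k + (\<Delta>\<^sup>2 - 2 * \<mu> * d k) / (2 * L)"
          using dstep[of k] L_pos by (smt (verit) divide_right_mono)
        also have "\<dots> = q * d k + \<Delta>\<^sup>2 / (2 * L)"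
          unfolding q_def using L_pos by (simp add: field_simps)
        also have "\<dots> \<le> q * (q ^ k * d0 + \<Delta>\<^sup>2 / (2 * \<mu>)) + \<Delta>\<^sup>2 / (2 * L)"
          using Suc q0 by (simp add: mult_left_mono)
        also have "\<dots> = q ^ Suc k * d0 + \<Delta>\<^sup>2 / (2 * \<mu>)"
          unfolding q_def using L_pos mu_pos by (simp add: field_simps power2_eq_square)
        finally show ?case .
      qed
      have "q ^ N \<le> exp (- \<mu> / L) ^ N"
        by (rule power_mono[OF _ q0]) (use exp_ge_add_one_self[of "- \<mu> / L"] in \<open>simp add: q_def\<close>)
      also have "\<dots> = exp (real N * (- \<mu> / L))" by (simp only: exp_of_nat_mult)
      also have "\<dots> \<le> exp (- lg)"
      proof -
        have "real N = of_int Ns" unfolding N_def using Ns_nonneg by simp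
        hence "L / \<mu> * lg \<le> real N" unfolding Ns_def by simp
        hence "lg \<le> real N * (\<mu> / L)" using L_pos mu_pos by (simp add: field_simps)
        thus ?thesis by simp
      qed
      also have "\<dots> = 6 * \<Delta>\<^sup>2 / (\<mu> * d0)"
        unfolding lg_def using d0pos mu_pos Delta_pos by (simp add: exp_minus')
      finally have "q ^ N * d0 \<le> 6 * \<Delta>\<^sup>2 / (\<mu> * d0) * d0"
        using d0pos by (intro mult_right_mono) auto
      hence "q ^ N * d0 \<le> 6 * \<Delta>\<^sup>2 / \<mu>" using d0pos by simp
      hence "d N \<le> 6 * \<Delta>\<^sup>2 / \<mu> + \<Delta>\<^sup>2 / (2 * \<mu>)" using ind[of N] by simp
      also have "\<dots> \<le> 7 * \<Delta>\<^sup>2 / \<mu>" using mu_pos by (simp add: field_simps)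
      finally show ?thesis unfolding xh' d_def .
    qed
  qed
  obtain N :: nat where xhN: "xhat = x N" and NNs: "int N \<le> Ns"
    and bk: "\<And>k. k < N \<Longrightarrow> b k > sqrt 6 * \<Delta>"
  proof -
    from stop_rule show ?thesis
    proof (elim disjE conjE exE)
      assume h1: "\<forall>k. int k < \<lceil>L / \<mu> * ln (\<mu> * (f x0 - f xs) / (6 * \<Delta>\<^sup>2))\<rceil>
              \<longrightarrow> norm (gt (x k)) > sqrt 6 * \<Delta>"
        and h2: "xhat = x (nat \<lceil>L / \<mu> * ln (\<mu> * (f x0 - f xs) / (6 * \<Delta>\<^sup>2))\<rceil>)"
      show ?thesis
      proof (rule that[of "nat Ns"])
        show "xhat = x (nat Ns)" using h2 unfolding Ns_def lg_def d0_def .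
        show "int (nat Ns) \<le> Ns" using Ns_nonneg by simp
        fix k assume "k < nat Ns"
        hence "int k < Ns" using Ns_nonneg by linarith
        thus "b k > sqrt 6 * \<Delta>" using h1 unfolding b_def Ns_def lg_def d0_def by blast
      qed
    next
      fix N :: nat
      assume "int N \<le> \<lceil>L / \<mu> * ln (\<mu> * (f x0 - f xs) / (6 * \<Delta>\<^sup>2))\<rceil>"
        "\<forall>k<N. norm (gt (x k)) > sqrt 6 * \<Delta>" "xhat = x N"
      thus ?thesis using that[of N] unfolding b_def Ns_def lg_def d0_def by blast
    qed
  qed
  have RHS_nonneg: "0 \<le> 2 * \<Delta> / \<mu> * sqrt (1 + L / \<mu>) * of_int \<lceil>lg\<rceil> + 4 * sqrt (L * d0) / \<mu>"
    using ceil_lg Delta_pos mu_pos L_pos d0_nonneg by simp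
  have nb: "norm (xhat - x0) \<le> 2 * \<Delta> / \<mu> * sqrt (1 + L / \<mu>) * of_int \<lceil>lg\<rceil> + 4 * sqrt (L * d0) / \<mu>"
  proof (cases "N = 0")
    case True thus ?thesis using xhN x_0 RHS_nonneg by simp
  next
    case False
    hence "1 \<le> Ns" using NNs by linarith
    hence "0 < L / \<mu> * lg" unfolding Ns_def by linarith
    hence lgpos: "0 < lg" using L_pos mu_pos by (smt (verit) divide_pos_pos mult_nonneg_nonpos)
    hence d0pos: "d0 > 0" using lg0 d0_nonneg by force
    hence "\<mu> \<le> L" by (rule muL)
    have big: "6 * \<Delta>\<^sup>2 < \<mu> * d0"
      using lgpos d0pos mu_pos Delta_pos unfolding lg_def by simp
    define c where "c = 4 / sqrt (2 * \<mu>)"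
    have key: "b k / L \<le> c * (sqrt (d k) - sqrt (d (Suc k))) + 2 * \<Delta> / L" if "k < N" for k
    proof -
      have bg: "b k > sqrt 6 * \<Delta>" using bk that .
      have "a k > (sqrt 6 - 1) * \<Delta>" using ba[of k] bg by (simp add: algebra_simps)
      moreover have "(sqrt 6 - 1) * \<Delta> \<ge> \<Delta>" using s6 Delta_pos by simp
      ultimately have aD: "a k > \<Delta>" by linarith
      hence a2: "(a k)\<^sup>2 > \<Delta>\<^sup>2" using Delta_pos by (simp add: power_strict_mono)
      define u where "u = sqrt (d k)"
      define v where "v = sqrt (d (Suc k))"
      have u2: "u\<^sup>2 = d k" unfolding u_def using d_nonneg[of k] by simp
      have v2: "v\<^sup>2 = d (Suc k)" unfolding v_def using d_nonneg[of "Suc k"] by simp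
      have v0: "0 \<le> v" unfolding v_def using d_nonneg[of "Suc k"] by simp
      have dd: "(a k)\<^sup>2 \<le> 2 * L * (u\<^sup>2 - v\<^sup>2) + \<Delta>\<^sup>2"
        using dstep[of k] L_pos unfolding u2 v2 by (simp add: field_simps)
      hence "v\<^sup>2 < u\<^sup>2" using a2 L_pos by (smt (verit) mult_nonneg_nonpos)
      moreover have "0 \<le> u" unfolding u_def using d_nonneg[of k] by simp
      ultimately have vu: "v < u" by (simp add: power_less_imp_less_base)
      hence u0: "0 < u" using v0 by linarith
      have aU: "sqrt (2 * \<mu>) * u \<le> a k"
      proof -
        have "2 * \<mu> * d k \<le> (a k)\<^sup>2" using PLk[of k] mu_pos by (simp add: field_simps)
        hence "sqrt (2 * \<mu> * d k) \<le> sqrt ((a k)\<^sup>2)" by (rule real_sqrt_le_mono)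
        thus ?thesis unfolding u_def a_def by (simp add: real_sqrt_mult)
      qed
      have apos: "a k > 0" using aD Delta_pos by linarith
      have smu: "sqrt (2 * \<mu>) > 0" using mu_pos by simp
      have "a k = (a k)\<^sup>2 / a k" using apos by (simp add: power2_eq_square)
      also have "\<dots> \<le> (2 * L * (u\<^sup>2 - v\<^sup>2) + \<Delta>\<^sup>2) / a k"
        using dd apos by (intro divide_right_mono) auto
      also have "\<dots> = 2 * L * ((u\<^sup>2 - v\<^sup>2) / a k) + \<Delta>\<^sup>2 / a k"
        by (simp add: add_divide_distrib)
      also have "(u\<^sup>2 - v\<^sup>2) / a k \<le> (u\<^sup>2 - v\<^sup>2) / (sqrt (2 * \<mu>) * u)"
        using \<open>v\<^sup>2 < u\<^sup>2\<close> aU smu u0 apos by (intro divide_left_mono) auto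
      also have "(u\<^sup>2 - v\<^sup>2) / (sqrt (2 * \<mu>) * u) \<le> 2 * (u - v) / sqrt (2 * \<mu>)"
      proof -
        have "u\<^sup>2 - v\<^sup>2 \<le> 2 * (u - v) * u"
          using zero_le_power2[of "u - v"] by (simp add: power2_eq_square algebra_simps)
        hence "(u\<^sup>2 - v\<^sup>2) / u \<le> 2 * (u - v)" using u0 by (simp add: pos_divide_le_eq)
        hence "((u\<^sup>2 - v\<^sup>2) / u) / sqrt (2 * \<mu>) \<le> 2 * (u - v) / sqrt (2 * \<mu>)"
          using smu by (intro divide_right_mono) auto
        thus ?thesis by (simp add: divide_divide_eq_left mult.commute)
      qed
      also have "\<Delta>\<^sup>2 / a k \<le> \<Delta>"
        using aD Delta_pos apos by (simp add: power2_eq_square field_simps mult_left_mono)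
      finally have "a k \<le> 2 * L * (2 * (u - v) / sqrt (2 * \<mu>)) + \<Delta>"
        using L_pos by simp
      hence "a k / L \<le> c * (u - v) + \<Delta> / L"
        unfolding c_def using L_pos by (simp add: field_simps)
      moreover have "b k / L \<le> a k / L + \<Delta> / L"
        using ba[of k] L_pos by (simp add: field_simps)
      ultimately show ?thesis unfolding u_def v_def by simp
    qed
    have "norm (xhat - x0) = norm (\<Sum>k<N. x (Suc k) - x k)"
      unfolding xhN x_0[symmetric] sum_lessThan_telescope ..
    also have "\<dots> \<le> (\<Sum>k<N. norm (x (Suc k) - x k))" by (rule norm_sum)
    also have "\<dots> = (\<Sum>k<N. b k / L)"
      using L_pos by (simp add: x_Suc b_def)
    also have "\<dots> \<le> (\<Sum>k<N. c * (sqrt (d k) - sqrt (d (Suc k))) + 2 * \<Delta> / L)"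
      by (rule sum_mono) (use key in simp)
    also have "\<dots> = c * (sqrt (d 0) - sqrt (d N)) + real N * (2 * \<Delta> / L)"
      by (simp add: sum.distrib sum_distrib_left[symmetric] sum_lessThan_telescope'[of "\<lambda>k. sqrt (d k)"])
    also have "\<dots> \<le> c * sqrt d0 + real N * (2 * \<Delta> / L)"
    proof -
      have "0 \<le> c" unfolding c_def using mu_pos by simp
      moreover have "0 \<le> sqrt (d N)" using d_nonneg[of N] by simp
      ultimately have "c * (sqrt (d 0) - sqrt (d N)) \<le> c * sqrt d0"
        using d_0 by (intro mult_left_mono) auto
      thus ?thesis by simp
    qed
    finally have n1: "norm (xhat - x0) \<le> c * sqrt d0 + real N * (2 * \<Delta> / L)" .
    have "real N < L / \<mu> * lg + 1"
      using NNs ceiling_correct[of "L / \<mu> * lg"] unfolding Ns_def by linarith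
    hence "real N * (2 * \<Delta> / L) \<le> (L / \<mu> * lg + 1) * (2 * \<Delta> / L)"
      using L_pos Delta_pos by (intro mult_right_mono) auto
    also have "\<dots> = 2 * \<Delta> / \<mu> * lg + 2 * \<Delta> / L"
      using L_pos mu_pos by (simp add: field_simps)
    finally have n2: "real N * (2 * \<Delta> / L) \<le> 2 * \<Delta> / \<mu> * lg + 2 * \<Delta> / L" .
    have n3: "2 * \<Delta> / \<mu> * lg \<le> 2 * \<Delta> / \<mu> * sqrt (1 + L / \<mu>) * of_int \<lceil>lg\<rceil>"
    proof -
      have "lg \<le> 1 * of_int \<lceil>lg\<rceil>" by simp
      also have "\<dots> \<le> sqrt (1 + L / \<mu>) * of_int \<lceil>lg\<rceil>"
        using ceil_lg L_pos mu_pos by (intro mult_right_mono) auto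
      finally have "2 * \<Delta> / \<mu> * lg \<le> 2 * \<Delta> / \<mu> * (sqrt (1 + L / \<mu>) * of_int \<lceil>lg\<rceil>)"
        using Delta_pos mu_pos by (intro mult_left_mono) auto
      thus ?thesis by (simp add: mult.assoc)
    qed
    define sd where "sd = sqrt d0 / sqrt \<mu>"
    have sd1: "sqrt (L * d0) / \<mu> \<ge> sd"
    proof -
      have "sqrt (L * d0) / \<mu> = sqrt (L / \<mu>) * sd"
        unfolding sd_def using mu_pos L_pos
        by (simp add: real_sqrt_mult real_sqrt_divide field_simps)
      moreover have "1 \<le> sqrt (L / \<mu>)" using \<open>\<mu> \<le> L\<close> mu_pos by simp
      moreover have "0 \<le> sd" unfolding sd_def using d0_nonneg mu_pos by simp
      ultimately show ?thesis using mult_right_mono[of 1 "sqrt (L / \<mu>)" sd] by simp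
    qed
    have sd2: "c * sqrt d0 \<le> 3 * sd"
    proof -
      have "c * sqrt d0 = 2 * sqrt 2 * sd"
        unfolding c_def sd_def using mu_pos
        by (simp add: real_sqrt_mult field_simps)
      moreover have "sqrt 2 \<le> 3 / 2"
        by (rule real_le_lsqrt) (auto simp: power2_eq_square)
      moreover have "0 \<le> sd" unfolding sd_def using d0_nonneg mu_pos by simp
      ultimately show ?thesis using mult_right_mono[of "2 * sqrt 2" 3 sd] by simp
    qed
    have sd3: "2 * \<Delta> / L \<le> sd"
    proof -
      have "2 * \<Delta> / L \<le> 2 * \<Delta> / \<mu>"
        using \<open>\<mu> \<le> L\<close> mu_pos Delta_pos by (simp add: frac_le)
      moreover have "(2 * \<Delta> / \<mu>)\<^sup>2 \<le> sd\<^sup>2"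
      proof -
        have "4 * \<Delta>\<^sup>2 \<le> \<mu> * d0" using big zero_le_power2[of \<Delta>] by linarith
        hence "\<Delta> * (\<Delta> * 4) \<le> \<mu> * d0" by (simp add: power2_eq_square mult.commute mult.left_commute)
        thus ?thesis
          unfolding sd_def using big mu_pos d0pos
          by (simp add: power_divide power_mult_distrib field_simps power2_eq_square)
      qed
      hence "2 * \<Delta> / \<mu> \<le> sd"
        by (rule power2_le_imp_le) (use d0_nonneg mu_pos in \<open>simp add: sd_def\<close>)
      ultimately show ?thesis by linarith
    qed
    show ?thesis using n1 n2 n3 sd1 sd2 sd3 by linarith
  qed
  show ?thesis using fb nb unfolding lg_def d0_def by simp
qed

end
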